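(* Let $q\in(1,+\infty)$ and $T>0$. Let $(x_i)_{i\in\mathbb N}$, $(v_i)_{i\in\mathbb N}$ be sequences with $x_i<0$, $v_i>0$, $|x_i|/v_i\to0$, and $\frac{v_i^{2q-1}}{|x_i|^{q-1}}>c$ for all $i$, for a given constant $c>0$. Let $(w_i)_{i\in\mathbb N}$ satisfy $0\le w_i\le v_i$ and $w_i/v_i\to0$. For $\theta\in(0,T]$ let $$I_i(\theta,w_i)=\inf\Big\{\frac1q\int_0^\theta|\eta'(s)|^q ds:\ \eta\in W^{1,q}(0,\theta;\mathbb R),\ \eta(0)=v_i,\ \eta(\theta)=w_i,\ \eta\ge w_i\text{ on }[0,\theta],\ x_i+\int_0^\theta\eta(s)ds\le0\Big\}.$$ Then: (i) as $i\to\infty$, $$\inf_{\theta\in(0,T]}I_i(\theta,w_i)\sim\frac{q^{q-1}}{(2q-1)^q}\frac{v_i^{2q-1}}{|x_i|^{q-1}};$$ (ii) if moreover $q=2$ and $\frac{v_i^2w_i}{|x_i|}\to0$, then $$\inf_{\theta\in(0,T]}I_i(\theta,w_i)=\frac29\frac{v_i^3}{|x_i|}+O\!\left(\frac{v_i^2w_i}{|x_i|}\right).$$ *)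

theory Defs
  imports "HOL-Analysis.Analysis" "HOL-Library.Landau_Symbols"
begin

definition sobolev_W1q :: "real \<Rightarrow> real \<Rightarrow> (real \<Rightarrow> real) \<Rightarrow> (real \<Rightarrow> real) \<Rightarrow> bool" where
  "sobolev_W1q q \<theta> \<eta> g \<longleftrightarrow>
     g absolutely_integrable_on {0..\<theta>} \<and>
     (\<lambda>s. \<bar>g s\<bar> powr q) integrable_on {0..\<theta>} \<and>
     (\<forall>t\<in>{0..\<theta>}. \<eta> t = \<eta> 0 + integral {0..t} g)"

text \<open>I(theta,w) for data x, v; the infimum of the empty set is +infinity.\<close>
definition I_cost :: "real \<Rightarrow> real \<Rightarrow> real \<Rightarrow> real \<Rightarrow> real \<Rightarrow> ereal" where
  "I_cost q x v \<theta> w =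
     (INF p \<in> {(\<eta>, g). sobolev_W1q q \<theta> \<eta> g \<and> \<eta> 0 = v \<and> \<eta> \<theta> = w \<and>
                      (\<forall>s\<in>{0..\<theta>}. w \<le> \<eta> s) \<and> x + integral {0..\<theta>} \<eta> \<le> 0}.
        ereal ((1 / q) * integral {0..\<theta>} (\<lambda>s. \<bar>snd p s\<bar> powr q)))"

definition J_cost :: "real \<Rightarrow> real \<Rightarrow> real \<Rightarrow> real \<Rightarrow> real \<Rightarrow> ereal" where
  "J_cost q T x v w = (INF \<theta> \<in> {0<..T}. I_cost q x v \<theta> w)"

end

theory Submission
  imports Defs
begin


lemma prod_abs_int:
  fixes g :: "real \<Rightarrow> real"
  assumes g: "g absolutely_integrable_on {lo..hi}" and h: "continuous_on {lo..hi} h"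
  shows "(\<lambda>t. h t * g t) absolutely_integrable_on {lo..hi}"
proof (rule absolutely_integrable_bounded_measurable_product_real[OF _ _ _ g])
  show "h \<in> borel_measurable (lebesgue_on {lo..hi})"
    using h by (simp add: continuous_imp_measurable_on_sets_lebesgue)
  show "bounded (h ` {lo..hi})"
    using h by (simp add: compact_continuous_image compact_imp_bounded)
qed auto

lemma lin1:
  fixes f :: "real \<Rightarrow> real"
  assumes "f integrable_on S" "(\<lambda>t. t * f t) integrable_on S"
  shows "integral S (\<lambda>t. (c - t) * f t) = c * integral S f - integral S (\<lambda>t. t * f t)"
    and "(\<lambda>t. (c - t) * f t) integrable_on S"
proof -
  have i: "(\<lambda>t. c * f t) integrable_on S" using assms(1) by (rule integrable_on_mult_right)
  have "integral S (\<lambda>t. (c - t) * f t) = integral S (\<lambda>t. c * f t - t * f t)"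
    by (simp add: left_diff_distrib)
  also have "\<dots> = integral S (\<lambda>t. c * f t) - integral S (\<lambda>t. t * f t)"
    by (rule integral_diff[OF i assms(2)])
  finally show "integral S (\<lambda>t. (c - t) * f t) = c * integral S f - integral S (\<lambda>t. t * f t)"
    by simp
  show "(\<lambda>t. (c - t) * f t) integrable_on S"
    using integrable_diff[OF i assms(2)] by (simp add: left_diff_distrib)
qed

lemma lin2:
  fixes f :: "real \<Rightarrow> real"
  assumes "f integrable_on S" "(\<lambda>t. t * f t) integrable_on S"
  shows "integral S (\<lambda>t. (t - c) * f t) = integral S (\<lambda>t. t * f t) - c * integral S f"
    and "(\<lambda>t. (t - c) * f t) integrable_on S"
proof -
  have i: "(\<lambda>t. c * f t) integrable_on S" using assms(1) by (rule integrable_on_mult_right)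
  have "integral S (\<lambda>t. (t - c) * f t) = integral S (\<lambda>t. t * f t - c * f t)"
    by (simp add: left_diff_distrib)
  also have "\<dots> = integral S (\<lambda>t. t * f t) - integral S (\<lambda>t. c * f t)"
    by (rule integral_diff[OF assms(2) i])
  finally show "integral S (\<lambda>t. (t - c) * f t) = integral S (\<lambda>t. t * f t) - c * integral S f"
    by simp
  show "(\<lambda>t. (t - c) * f t) integrable_on S"
    using integrable_diff[OF assms(2) i] by (simp add: left_diff_distrib)
qed

lemma ibp:
  fixes g :: "real \<Rightarrow> real"
  assumes g: "g absolutely_integrable_on {0..b}" and b: "0 \<le> b"
  shows "((\<lambda>s. integral {0..s} g) has_integral (integral {0..b} (\<lambda>t. (b - t) * g t))) {0..b}"
proof -
  define F where "F s = integral {0..s} g" for s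
  define G where "G s = integral {0..s} (\<lambda>t. t * g t)" for s
  define A where "A s = integral {0..s} (\<lambda>t. \<bar>g t\<bar>)" for s
  define H where "H s = s * F s - G s" for s
  have tg: "(\<lambda>t. t * g t) absolutely_integrable_on {0..b}"
    by (rule prod_abs_int[OF g]) (intro continuous_intros)
  have gi: "g integrable_on {0..b}" using g by (simp add: absolutely_integrable_on_def)
  have ai: "(\<lambda>t. \<bar>g t\<bar>) integrable_on {0..b}" using g by (simp add: absolutely_integrable_on_def)
  have tgi: "(\<lambda>t. t * g t) integrable_on {0..b}" using tg by (simp add: absolutely_integrable_on_def)
  have sub: "integral {0..hi} f - integral {0..lo} f = integral {lo..hi} f"
    if "f integrable_on {0..b}" "0 \<le> lo" "lo \<le> hi" "hi \<le> b" for f :: "real \<Rightarrow> real" and lo hi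
  proof -
    have "f integrable_on {0..hi}" using that integrable_on_subinterval by fastforce
    then show ?thesis using Henstock_Kurzweil_Integration.integral_combine[where a=0 and c=lo and b=hi and f=f] that by simp
  qed
  have subi: "f integrable_on {lo..hi}"
    if "f integrable_on {0..b}" "0 \<le> lo" "hi \<le> b" for f :: "real \<Rightarrow> real" and lo hi
    using that integrable_on_subinterval by fastforce
  have est1: "\<bar>H y - H s - (y - s) * F s\<bar> \<le> (y - s) * (A y - A s)"
    if "0 \<le> s" "s \<le> y" "y \<le> b" for s y
  proof -
    have e: "H y - H s - (y - s) * F s = y * integral {s..y} g - integral {s..y} (\<lambda>t. t * g t)"
      using sub[OF gi, of s y] sub[OF tgi, of s y] that unfolding H_def F_def G_def
      by (simp add: algebra_simps)
    also have "\<dots> = integral {s..y} (\<lambda>t. (y - t) * g t)"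
      using lin1(1)[OF subi[OF gi, of s y] subi[OF tgi, of s y]] that by simp
    finally have e2: "H y - H s - (y - s) * F s = integral {s..y} (\<lambda>t. (y - t) * g t)" .
    have "norm (integral {s..y} (\<lambda>t. (y - t) * g t)) \<le> integral {s..y} (\<lambda>t. (y - s) * \<bar>g t\<bar>)"
    proof (rule integral_norm_bound_integral)
      show "(\<lambda>t. (y - t) * g t) integrable_on {s..y}"
        using lin1(2)[OF subi[OF gi, of s y] subi[OF tgi, of s y]] that by simp
      show "(\<lambda>t. (y - s) * \<bar>g t\<bar>) integrable_on {s..y}"
        using subi[OF ai, of s y] that by (simp add: integrable_on_mult_right)
      fix t assume "t \<in> {s..y}"
      then show "norm ((y - t) * g t) \<le> (y - s) * \<bar>g t\<bar>"
        by (simp add: abs_mult mult_right_mono)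
    qed
    also have "\<dots> = (y - s) * (A y - A s)"
      using sub[OF ai, of s y] that unfolding A_def by simp
    finally show ?thesis using e2 by (simp add: real_norm_def)
  qed
  have est2: "\<bar>H y - H s - (y - s) * F s\<bar> \<le> (s - y) * (A s - A y)"
    if "0 \<le> y" "y \<le> s" "s \<le> b" for s y
  proof -
    have e: "H y - H s - (y - s) * F s = integral {y..s} (\<lambda>t. t * g t) - y * integral {y..s} g"
      using sub[OF gi, of y s] sub[OF tgi, of y s] that unfolding H_def F_def G_def
      by (simp add: algebra_simps)
    also have "\<dots> = integral {y..s} (\<lambda>t. (t - y) * g t)"
      using lin2(1)[OF subi[OF gi, of y s] subi[OF tgi, of y s]] that by simp
    finally have e2: "H y - H s - (y - s) * F s = integral {y..s} (\<lambda>t. (t - y) * g t)" .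
    have "norm (integral {y..s} (\<lambda>t. (t - y) * g t)) \<le> integral {y..s} (\<lambda>t. (s - y) * \<bar>g t\<bar>)"
    proof (rule integral_norm_bound_integral)
      show "(\<lambda>t. (t - y) * g t) integrable_on {y..s}"
        using lin2(2)[OF subi[OF gi, of y s] subi[OF tgi, of y s]] that by simp
      show "(\<lambda>t. (s - y) * \<bar>g t\<bar>) integrable_on {y..s}"
        using subi[OF ai, of y s] that by (simp add: integrable_on_mult_right)
      fix t assume "t \<in> {y..s}"
      then show "norm ((t - y) * g t) \<le> (s - y) * \<bar>g t\<bar>"
        by (simp add: abs_mult mult_right_mono)
    qed
    also have "\<dots> = (s - y) * (A s - A y)"
      using sub[OF ai, of y s] that unfolding A_def by simp
    finally show ?thesis using e2 by (simp add: real_norm_def)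
  qed
  have est: "\<bar>(H y - H s) / (y - s) - F s\<bar> \<le> \<bar>A y - A s\<bar>"
    if "s \<in> {0..b}" "y \<in> {0..b}" "y \<noteq> s" for s y
  proof -
    have "(H y - H s) / (y - s) - F s = (H y - H s - (y - s) * F s) / (y - s)"
      using that by (simp add: field_simps)
    moreover have "\<bar>H y - H s - (y - s) * F s\<bar> \<le> \<bar>y - s\<bar> * \<bar>A y - A s\<bar>"
    proof (cases "s \<le> y")
      case True
      then show ?thesis using est1[of s y] that
        by (smt (verit, best) abs_of_nonneg atLeastAtMost_iff mult_left_mono)
    next
      case False
      then show ?thesis using est2[of y s] that
        by (smt (verit, best) abs_minus_commute abs_of_nonneg atLeastAtMost_iff mult_left_mono abs_mult)
    qed
    ultimately show ?thesis using that
      by (simp add: abs_divide divide_le_eq mult.commute)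
  qed
  have Acont: "continuous_on {0..b} A"
    unfolding A_def by (rule indefinite_integral_continuous_1[OF ai])
  have deriv: "(H has_vector_derivative F s) (at s within {0..b})" if s: "s \<in> {0..b}" for s
  proof -
    have "((\<lambda>y. (H y - H s) / (y - s) - F s) \<longlongrightarrow> 0) (at s within {0..b})"
    proof (rule Lim_null_comparison)
      show "\<forall>\<^sub>F y in at s within {0..b}. norm ((H y - H s) / (y - s) - F s) \<le> \<bar>A y - A s\<bar>"
        unfolding eventually_at_filter using est[OF s] by (auto intro!: always_eventually)
      have "(A \<longlongrightarrow> A s) (at s within {0..b})"
        using Acont s by (simp add: continuous_on_def)
      then have "((\<lambda>y. A y - A s) \<longlongrightarrow> 0) (at s within {0..b})"
        by (simp add: LIM_zero)
      then show "((\<lambda>y. \<bar>A y - A s\<bar>) \<longlongrightarrow> 0) (at s within {0..b})"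
        using tendsto_rabs_zero by blast
    qed
    then have "((\<lambda>y. (H y - H s) / (y - s)) \<longlongrightarrow> F s) (at s within {0..b})"
      by (simp add: LIM_zero_iff)
    then show ?thesis
      by (simp add: has_field_derivative_iff has_real_derivative_iff_has_vector_derivative[symmetric])
  qed
  have "(F has_integral (H b - H 0)) {0..b}"
    by (rule fundamental_theorem_of_calculus[OF b deriv])
  moreover have "H 0 = 0" unfolding H_def G_def by simp
  moreover have "H b = integral {0..b} (\<lambda>t. (b - t) * g t)"
    using lin1(1)[OF gi tgi] unfolding H_def F_def G_def by simp
  ultimately show ?thesis unfolding F_def by simp
qed



lemma int_powr:
  fixes a b p :: real
  assumes p: "0 < p" and b: "0 \<le> b" "b \<le> a"
  shows "((\<lambda>t. (a - t) powr p) has_integral ((a powr (p+1) - (a-b) powr (p+1))/(p+1))) {0..b}"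
proof -
  have "((\<lambda>t. (a - t) powr p) has_integral
      ((\<lambda>t. - ((a - t) powr (p+1)) / (p+1)) b - (\<lambda>t. - ((a - t) powr (p+1)) / (p+1)) 0)) {0..b}"
  proof (rule fundamental_theorem_of_calculus_interior[OF b(1)])
    show "continuous_on {0..b} (\<lambda>t. - ((a - t) powr (p + 1)) / (p + 1))"
      using b p by (intro continuous_intros continuous_on_powr') auto
    fix t assume t: "t \<in> {0<..<b}"
    then have "0 < a - t" using b by auto
    have d: "DERIV (\<lambda>t. (a - t) powr (p+1)) t :> (p+1) * (a - t) powr (p + 1 - of_nat 1) * (-1)"
      using \<open>0 < a - t\<close> by (intro DERIV_fun_powr) (auto intro!: derivative_eq_intros simp: \<open>0 < a - t\<close> less_diff_eq)
    have "DERIV (\<lambda>t. - ((a - t) powr (p + 1)) / (p + 1)) t :> - ((p+1) * (a - t) powr (p + 1 - of_nat 1) * (-1)) / (p+1)"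
      by (intro DERIV_cdivide DERIV_minus d)
    then have "DERIV (\<lambda>t. - ((a - t) powr (p + 1)) / (p + 1)) t :> (a - t) powr p"
      using p by simp
    then show "((\<lambda>t. - ((a - t) powr (p + 1)) / (p + 1)) has_vector_derivative (a - t) powr p) (at t)"
      unfolding has_real_derivative_iff_has_vector_derivative[symmetric] .
  qed
  then show ?thesis by (simp add: diff_divide_distrib)
qed



lemma lower_gen:
  fixes g \<eta> :: "real \<Rightarrow> real" and q \<theta> v w x a \<mu> :: real
  assumes q: "1 < q" and th: "0 < \<theta>" and sob: "sobolev_W1q q \<theta> \<eta> g"
    and e0: "\<eta> 0 = v" and eth: "\<eta> \<theta> = w" and ge: "\<forall>s\<in>{0..\<theta>}. w \<le> \<eta> s"
    and xc: "x + integral {0..\<theta>} \<eta> \<le> 0"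
    and w0: "0 \<le> w" and a: "0 < a" and mu: "0 \<le> \<mu>"
  shows "\<mu> * (a * (v - w) + x) - \<mu> powr (q/(q-1)) * a powr (q/(q-1) + 1) / (q/(q-1) * (q/(q-1) + 1))
           \<le> (1/q) * integral {0..\<theta>} (\<lambda>s. \<bar>g s\<bar> powr q)"
proof -
  define p where "p = q/(q-1)"
  have p1: "1 < p" using q by (simp add: p_def)
  have pq: "1/p + 1/q = 1" using q by (simp add: p_def field_simps)
  define b where "b = min a \<theta>"
  have b0: "0 < b" "b \<le> \<theta>" "b \<le> a" using a th by (auto simp: b_def)
  have gabs: "g absolutely_integrable_on {0..\<theta>}" and gq: "(\<lambda>s. \<bar>g s\<bar> powr q) integrable_on {0..\<theta>}"
    and eta: "\<And>t. t \<in> {0..\<theta>} \<Longrightarrow> \<eta> t = v + integral {0..t} g"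
    using sob e0 unfolding sobolev_W1q_def by auto
  have gabsb: "g absolutely_integrable_on {0..b}"
    using absolutely_integrable_on_subinterval[OF gabs] b0 by auto
  have gi: "g integrable_on {0..b}" using gabsb by (simp add: absolutely_integrable_on_def)
  have tgi: "(\<lambda>t. t * g t) integrable_on {0..b}"
    using prod_abs_int[OF gabsb, of "\<lambda>t. t"] by (simp add: absolutely_integrable_on_def continuous_on_id)
  have gqb: "(\<lambda>s. \<bar>g s\<bar> powr q) integrable_on {0..b}"
    using integrable_on_subinterval[OF gq] b0 by auto
  have Fc: "continuous_on {0..\<theta>} (\<lambda>s. integral {0..s} g)"
    using gabs by (intro indefinite_integral_continuous_1) (simp add: absolutely_integrable_on_def)
  have etaint: "\<eta> integrable_on {0..\<theta>}"
  proof -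
    have "(\<lambda>s. v + integral {0..s} g) integrable_on {0..\<theta>}"
      by (intro integrable_continuous_real continuous_intros Fc)
    moreover have "\<And>s. s \<in> {0..\<theta>} \<Longrightarrow> v + integral {0..s} g = \<eta> s" using eta by simp
    ultimately show ?thesis
      using integrable_cong[where A="{0..\<theta>}" and f="\<lambda>s. v + integral {0..s} g" and g=\<eta>] by simp
  qed
  have etaintb: "\<eta> integrable_on {0..b}" using integrable_on_subinterval[OF etaint] b0 by auto
  have I1: "integral {0..b} (\<lambda>s. integral {0..s} g) = integral {0..b} (\<lambda>t. (b - t) * g t)"
    using ibp[OF gabsb] b0 by (simp add: has_integral_iff)
  have Fib: "(\<lambda>s. integral {0..s} g) integrable_on {0..b}"
    using ibp[OF gabsb] b0 by (simp add: has_integral_iff)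
  have I2: "integral {0..b} \<eta> = b * v + integral {0..b} (\<lambda>s. integral {0..s} g)"
  proof -
    have "integral {0..b} \<eta> = integral {0..b} (\<lambda>s. v + integral {0..s} g)"
      using eta b0 by (intro integral_cong) auto
    also have "\<dots> = integral {0..b} (\<lambda>s. v) + integral {0..b} (\<lambda>s. integral {0..s} g)"
      by (rule integral_add[OF integrable_const_ivl Fib])
    finally show ?thesis using b0 by simp
  qed
  have I3: "integral {0..b} (\<lambda>t. (a - t) * g t) = (a - b) * (\<eta> b - v) + integral {0..b} \<eta> - b * v"
  proof -
    have "\<eta> b - v = integral {0..b} g" using eta b0 by auto
    then show ?thesis using lin1(1)[OF gi tgi, of a] lin1(1)[OF gi tgi, of b] I1 I2
      by (simp add: algebra_simps)
  qed
  have A2: "a * (v - w) + x \<le> - integral {0..b} (\<lambda>t. (a - t) * g t)"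
  proof (cases "a \<le> \<theta>")
    case True
    then have bb: "b = a" by (simp add: b_def)
    have "integral {0..a} \<eta> \<le> integral {0..\<theta>} \<eta>"
      using True etaint etaintb bb ge w0 by (intro integral_subset_le) auto
    then show ?thesis using I3 bb xc w0 a by (simp add: algebra_simps) (smt (verit) mult_nonneg_nonneg)
  next
    case False
    then have bb: "b = \<theta>" by (simp add: b_def)
    show ?thesis using I3 bb xc w0 th eth by (simp add: algebra_simps) (smt (verit) mult_nonneg_nonneg)
  qed
  have cint: "(\<lambda>t. (\<mu> * (a - t)) powr p) integrable_on {0..b}"
    using b0 mu p1 by (intro integrable_continuous_real continuous_on_powr' continuous_intros) auto
  have A4: "integral {0..b} (\<lambda>t. - \<mu> * ((a - t) * g t))
      \<le> integral {0..b} (\<lambda>t. (\<mu> * (a - t)) powr p / p + \<bar>g t\<bar> powr q / q)"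
  proof (rule integral_le)
    show "(\<lambda>t. - \<mu> * ((a - t) * g t)) integrable_on {0..b}"
      by (intro integrable_on_mult_right lin1(2)[OF gi tgi])
    show "(\<lambda>t. (\<mu> * (a - t)) powr p / p + \<bar>g t\<bar> powr q / q) integrable_on {0..b}"
      using cint gqb by (intro integrable_add integrable_on_divide)
    fix t assume t: "t \<in> {0..b}"
    have n: "0 \<le> \<mu> * (a - t)" using t b0 mu by auto
    have "- \<mu> * ((a - t) * g t) \<le> (\<mu> * (a - t)) * \<bar>g t\<bar>"
      using n by (smt (verit) abs_ge_minus_self mult.assoc mult_left_mono mult_minus_left mult_minus_right)
    also have "\<dots> \<le> (\<mu> * (a - t)) powr p / p + \<bar>g t\<bar> powr q / q"
      using Youngs_inequality[OF p1 q pq n] by simp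
    finally show "- \<mu> * ((a - t) * g t) \<le> (\<mu> * (a - t)) powr p / p + \<bar>g t\<bar> powr q / q" .
  qed
  have A4': "integral {0..b} (\<lambda>t. - \<mu> * ((a - t) * g t)) = - \<mu> * integral {0..b} (\<lambda>t. (a - t) * g t)"
    by (simp add: integral_mult_right)
  have A4'': "integral {0..b} (\<lambda>t. (\<mu> * (a - t)) powr p / p + \<bar>g t\<bar> powr q / q)
      = integral {0..b} (\<lambda>t. (\<mu> * (a - t)) powr p) / p + integral {0..b} (\<lambda>t. \<bar>g t\<bar> powr q) / q"
    using cint gqb by (simp add: integral_add integrable_on_divide integral_divide)
  have A5: "integral {0..b} (\<lambda>t. (\<mu> * (a - t)) powr p) \<le> \<mu> powr p * (a powr (p+1) / (p+1))"
  proof -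
    have "integral {0..b} (\<lambda>t. (\<mu> * (a - t)) powr p) = integral {0..b} (\<lambda>t. \<mu> powr p * (a - t) powr p)"
      using mu b0 by (intro integral_cong) (auto simp: powr_mult)
    also have "\<dots> = \<mu> powr p * ((a powr (p+1) - (a-b) powr (p+1))/(p+1))"
      using int_powr[of p b a] p1 b0 by (simp add: integral_mult_right has_integral_iff)
    also have "\<dots> \<le> \<mu> powr p * (a powr (p+1) / (p+1))"
      using p1 by (intro mult_left_mono divide_right_mono) auto
    finally show ?thesis .
  qed
  have A6: "integral {0..b} (\<lambda>t. \<bar>g t\<bar> powr q) \<le> integral {0..\<theta>} (\<lambda>t. \<bar>g t\<bar> powr q)"
    using gq gqb b0 by (intro integral_subset_le) auto
  have "\<mu> * (a * (v - w) + x) \<le> - \<mu> * integral {0..b} (\<lambda>t. (a - t) * g t)"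
    using mult_left_mono[OF A2 mu] by simp
  also have "\<dots> \<le> \<mu> powr p * (a powr (p+1) / (p+1)) / p + integral {0..\<theta>} (\<lambda>t. \<bar>g t\<bar> powr q) / q"
    using A4 A4' A4'' A5 A6 p1 q
    by (smt (verit) divide_right_mono)
  finally show ?thesis unfolding p_def[symmetric] by (simp add: field_simps)
qed



lemma alg_key:
  fixes q V X :: real
  assumes q: "1 < q" and V: "0 < V" and X: "0 < X"
  defines "p \<equiv> q/(q-1)"
  defines "a \<equiv> (p+1)*X/V"
  defines "\<mu> \<equiv> p powr (q-1) / (p+1) powr q * V powr (2*q-1) / X powr q"
  shows "\<mu> powr p * a powr (p+1) = \<mu> * X * p * (p+1)"
proof -
  have p: "1 < p" using q by (simp add: p_def)
  have pq: "p * (q - 1) = q" using q by (simp add: p_def)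
  have mu: "0 < \<mu>" using p V X by (simp add: \<mu>_def)
  have aa: "0 < a" using p V X by (simp add: a_def)
  have lmu: "ln \<mu> = (q-1) * ln p - q * ln (p+1) + (2*q-1) * ln V - q * ln X"
    using p V X by (simp add: \<mu>_def ln_div ln_mult ln_powr)
  have la: "ln a = ln (p+1) + ln X - ln V"
    using p V X by (simp add: a_def ln_div ln_mult)
  have "ln (\<mu> powr p * a powr (p+1)) = p * ln \<mu> + (p+1) * ln a"
    using mu aa by (simp add: ln_mult ln_powr)
  also have "\<dots> = (p*(q-1)) * ln p - (p*q) * ln (p+1) + (p*(2*q-1)) * ln V - (p*q) * ln X
       + (p+1) * ln (p+1) + (p+1) * ln X - (p+1) * ln V"
    unfolding lmu la by (simp add: algebra_simps)
  also have "\<dots> = q * ln p - (p+q) * ln (p+1) + (p+2*q) * ln V - (p+q) * ln X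
       + (p+1) * ln (p+1) + (p+1) * ln X - (p+1) * ln V"
  proof -
    have h1: "p*q = p + q" using pq by (simp add: algebra_simps)
    have h2: "p*(2*q-1) = p + 2*q" using pq by (simp add: algebra_simps)
    show ?thesis by (simp only: h1 h2 pq)
  qed
  also have "\<dots> = q * ln p + (1 - q) * ln (p+1) + (2*q-1) * ln V + (1 - q) * ln X"
    by (simp add: algebra_simps)
  also have "\<dots> = ln (\<mu> * X * p * (p+1))"
  proof -
    have "ln (\<mu> * X * p * (p+1)) = ln \<mu> + ln X + ln p + ln (p+1)"
      using mu X p by (simp add: ln_mult)
    then show ?thesis unfolding lmu by (simp add: algebra_simps)
  qed
  finally have "ln (\<mu> powr p * a powr (p+1)) = ln (\<mu> * X * p * (p+1))" .
  then show ?thesis using mu aa X p by simp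
qed

lemma alg_val:
  fixes q V X :: real
  assumes q: "1 < q" and V: "0 < V" and X: "0 < X"
  defines "p \<equiv> q/(q-1)"
  defines "a \<equiv> (p+1)*X/V"
  defines "\<mu> \<equiv> p powr (q-1) / (p+1) powr q * V powr (2*q-1) / X powr q"
  shows "\<mu> * (a * V - X) - \<mu> powr p * a powr (p+1) / (p * (p+1))
         = (1/q) * (p/(p+1)) powr q * (V powr (2*q-1) / X powr (q-1))"
proof -
  have p: "1 < p" using q by (simp add: p_def)
  have pq: "p * (q - 1) = q" using q by (simp add: p_def)
  have k: "\<mu> powr p * a powr (p+1) = \<mu> * X * p * (p+1)"
    using alg_key[OF q V X] unfolding p_def a_def \<mu>_def .
  have aV: "a * V - X = p * X" using V by (simp add: a_def field_simps)
  have "\<mu> * (a * V - X) - \<mu> powr p * a powr (p+1) / (p * (p+1)) = (p - 1) * \<mu> * X"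
  proof -
    have "\<mu> * X * p * (p+1) / (p * (p+1)) = \<mu> * X" using p by simp
    then show ?thesis by (simp only: k aV) (simp add: algebra_simps)
  qed
  also have "\<dots> = (1/q) * (p/(p+1)) powr q * (V powr (2*q-1) / X powr (q-1))"
  proof -
    have pm1: "p - 1 = 1/(q-1)" using q by (simp add: p_def field_simps)
    have e1: "p powr (q-1) = p powr q / p" using p by (simp add: powr_diff)
    have e2: "X / X powr q = 1 / X powr (q-1)" using X by (simp add: powr_diff)
    have e4: "(p - 1) * p powr (q-1) = p powr q / q"
    proof -
      have "(p - 1) / p = 1 / q" using q by (simp add: p_def field_simps)
      moreover have "(p - 1) * p powr (q-1) = ((p-1)/p) * p powr q" using p by (simp add: e1)
      ultimately show ?thesis by simp
    qed
    have "(p - 1) * \<mu> * X = ((p - 1) * p powr (q-1)) / (p+1) powr q * V powr (2*q-1) * (X / X powr q)"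
      unfolding \<mu>_def by (simp add: field_simps)
    also have "\<dots> = (1/q) * (p powr q / (p+1) powr q) * (V powr (2*q-1) / X powr (q-1))"
      unfolding e4 e2 by (simp add: field_simps)
    also have "\<dots> = (1/q) * (p/(p+1)) powr q * (V powr (2*q-1) / X powr (q-1))"
      using p by (simp add: powr_divide)
    finally show ?thesis .
  qed
  finally show ?thesis .
qed

lemma K_eq:
  fixes q :: real assumes q: "1 < q"
  shows "(1/q) * ((q/(q-1))/((q/(q-1))+1)) powr q = q powr (q - 1) / (2 * q - 1) powr q"
proof -
  have h: "(q/(q-1))+1 = (2*q-1)/(q-1)" using q by (simp add: field_simps)
  have "(q/(q-1))/((q/(q-1))+1) = q / (2*q-1)" unfolding h using q by simp
  then show ?thesis using q by (simp add: powr_divide powr_diff)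
qed



lemma upper:
  fixes q v w x :: real
  assumes q: "1 < q" and w0: "0 \<le> w" and wv: "w < v" and x: "x < 0"
  defines "p \<equiv> q/(q-1)"
  defines "\<theta> \<equiv> (p+1) * \<bar>x\<bar> / (v + p*w)"
  shows "I_cost q x v \<theta> w \<le> ereal ((1/q) * (p/(p+1)) powr q * ((v-w) powr q * (v + p*w) powr (q-1) / \<bar>x\<bar> powr (q-1)))"
proof -
  have p: "1 < p" using q by (simp add: p_def)
  have pq: "(p - 1) * q = p" using q by (simp add: p_def field_simps)
  define V where "V = v - w"
  have V: "0 < V" using wv by (simp add: V_def)
  have vpw: "0 < v + p*w" using wv w0 p by (smt (verit) mult_nonneg_nonneg)
  have th: "0 < \<theta>" using p x vpw unfolding \<theta>_def by (intro divide_pos_pos mult_pos_pos) auto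
  define \<eta> where "\<eta> s = w + V * (1 - s/\<theta>) powr p" for s
  define g where "g s = - (V * p / \<theta>) * (1 - s/\<theta>) powr (p - 1)" for s
  have base: "0 \<le> 1 - s/\<theta>" if "s \<in> {0..\<theta>}" for s using that th by (simp add: field_simps)
  have gc: "continuous_on {0..\<theta>} g"
    unfolding g_def using p base th by (intro continuous_intros continuous_on_powr') auto
  have etac: "continuous_on {0..\<theta>} \<eta>"
    unfolding \<eta>_def using p base th by (intro continuous_intros continuous_on_powr') auto
  have dpow: "DERIV (\<lambda>s. (1 - s/\<theta>) powr r) s :> r * (1 - s/\<theta>) powr (r - 1) * (- 1/\<theta>)"
    if "s < \<theta>" for s r
  proof -
    have "0 < 1 - s/\<theta>" using that th by (simp add: field_simps)
    then have "DERIV (\<lambda>s. (1 - s/\<theta>) powr r) s :> r * (1 - s/\<theta>) powr (r - of_nat 1) * (- 1/\<theta>)"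
      by (intro DERIV_fun_powr) (use th in \<open>auto intro!: derivative_eq_intros\<close>)
    then show ?thesis by simp
  qed
  have deta: "(\<eta> has_vector_derivative g s) (at s)" if "s < \<theta>" for s
  proof -
    have "DERIV \<eta> s :> 0 + V * (p * (1 - s/\<theta>) powr (p - 1) * (- 1/\<theta>))"
      unfolding \<eta>_def by (intro DERIV_add DERIV_const DERIV_cmult dpow that)
    moreover have "0 + V * (p * (1 - s/\<theta>) powr (p - 1) * (- 1/\<theta>)) = g s"
      by (simp add: g_def)
    ultimately show ?thesis by (simp add: has_real_derivative_iff_has_vector_derivative)
  qed
  have absg: "\<bar>g s\<bar> powr q = (V * p / \<theta>) powr q * (1 - s/\<theta>) powr p" if "s \<in> {0..\<theta>}" for s
  proof -
    have n: "0 \<le> (1 - s/\<theta>) powr (p - 1)" by simp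
    have "\<bar>g s\<bar> = (V * p / \<theta>) * (1 - s/\<theta>) powr (p - 1)"
      unfolding g_def using V p th by (simp add: abs_mult)
    moreover have "0 \<le> V * p / \<theta>" using V p th by simp
    ultimately have "\<bar>g s\<bar> powr q = (V * p / \<theta>) powr q * ((1 - s/\<theta>) powr (p - 1)) powr q"
      using n by (simp only: powr_mult)
    also have "((1 - s/\<theta>) powr (p - 1)) powr q = (1 - s/\<theta>) powr p"
      using pq by (simp add: powr_powr)
    finally show ?thesis .
  qed
  have gqc: "continuous_on {0..\<theta>} (\<lambda>s. \<bar>g s\<bar> powr q)"
    using gc q by (intro continuous_on_powr' continuous_intros) auto
  have sob: "sobolev_W1q q \<theta> \<eta> g"
    unfolding sobolev_W1q_def
  proof (intro conjI ballI)
    show "g absolutely_integrable_on {0..\<theta>}" by (rule absolutely_integrable_continuous_real[OF gc])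
    show "(\<lambda>s. \<bar>g s\<bar> powr q) integrable_on {0..\<theta>}" by (rule integrable_continuous_real[OF gqc])
    fix t assume t: "t \<in> {0..\<theta>}"
    have "(g has_integral (\<eta> t - \<eta> 0)) {0..t}"
    proof (rule fundamental_theorem_of_calculus_interior)
      show "0 \<le> t" using t by simp
      show "continuous_on {0..t} \<eta>" using t by (intro continuous_on_subset[OF etac]) auto
      fix s assume "s \<in> {0<..<t}" then show "(\<eta> has_vector_derivative g s) (at s)"
        using t by (intro deta) auto
    qed
    then show "\<eta> t = \<eta> 0 + integral {0..t} g" by (simp add: has_integral_iff)
  qed
  have e0: "\<eta> 0 = v" by (simp add: \<eta>_def V_def)
  have eth: "\<eta> \<theta> = w" using th by (simp add: \<eta>_def)
  have ge: "\<forall>s\<in>{0..\<theta>}. w \<le> \<eta> s" using V by (simp add: \<eta>_def)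
  have ipow: "((\<lambda>s. (1 - s/\<theta>) powr r) has_integral \<theta>/(r+1)) {0..\<theta>}" if r: "0 < r" for r
  proof -
    have "((\<lambda>s. (1 - s/\<theta>) powr r) has_integral
        ((\<lambda>s. - \<theta>/(r+1) * (1 - s/\<theta>) powr (r+1)) \<theta> - (\<lambda>s. - \<theta>/(r+1) * (1 - s/\<theta>) powr (r+1)) 0)) {0..\<theta>}"
    proof (rule fundamental_theorem_of_calculus_interior)
      show "0 \<le> \<theta>" using th by simp
      show "continuous_on {0..\<theta>} (\<lambda>s. - \<theta> / (r + 1) * (1 - s / \<theta>) powr (r + 1))"
        using r base th by (intro continuous_intros continuous_on_powr') auto
      fix s assume s: "s \<in> {0<..<\<theta>}"
      have "DERIV (\<lambda>s. - \<theta>/(r+1) * (1 - s/\<theta>) powr (r+1)) s :> - \<theta>/(r+1) * ((r+1) * (1 - s/\<theta>) powr (r + 1 - 1) * (- 1/\<theta>))"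
        using s by (intro DERIV_cmult dpow) auto
      moreover have "- \<theta>/(r+1) * ((r+1) * (1 - s/\<theta>) powr (r + 1 - 1) * (- 1/\<theta>)) = (1 - s/\<theta>) powr r"
        using th r by simp
      ultimately show "((\<lambda>s. - \<theta> / (r + 1) * (1 - s / \<theta>) powr (r + 1)) has_vector_derivative (1 - s / \<theta>) powr r) (at s)"
        by (simp add: has_real_derivative_iff_has_vector_derivative)
    qed
    then show ?thesis using th r by simp
  qed
  have ieta: "integral {0..\<theta>} \<eta> = w * \<theta> + V * (\<theta>/(p+1))"
  proof -
    have "(\<eta> has_integral (w * \<theta> + V * (\<theta>/(p+1)))) {0..\<theta>}"
      unfolding \<eta>_def
      using has_integral_add[OF has_integral_const_real[of w 0 \<theta>] has_integral_mult_right[OF ipow[of p], of V]] p th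
      by (simp add: mult.commute)
    then show ?thesis by (simp add: has_integral_iff)
  qed
  have xc: "x + integral {0..\<theta>} \<eta> \<le> 0"
  proof -
    have "w * \<theta> + V * (\<theta>/(p+1)) = \<theta> * (v + p*w) / (p+1)"
      using p by (simp add: V_def field_simps)
    also have "\<dots> = \<bar>x\<bar>" using vpw p by (simp add: \<theta>_def)
    finally show ?thesis using ieta x by simp
  qed
  have icost: "integral {0..\<theta>} (\<lambda>s. \<bar>snd (\<eta>, g) s\<bar> powr q) = (V * p / \<theta>) powr q * (\<theta>/(p+1))"
  proof -
    have "integral {0..\<theta>} (\<lambda>s. \<bar>snd (\<eta>, g) s\<bar> powr q) = integral {0..\<theta>} (\<lambda>s. (V * p / \<theta>) powr q * (1 - s/\<theta>) powr p)"
      using absg by (intro integral_cong) auto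
    also have "\<dots> = (V * p / \<theta>) powr q * (\<theta>/(p+1))"
      using ipow[of p] p by (simp add: integral_mult_right has_integral_iff)
    finally show ?thesis .
  qed
  have val: "(V * p / \<theta>) powr q * (\<theta>/(p+1)) = (p/(p+1)) powr q * (V powr q * (v + p*w) powr (q-1) / \<bar>x\<bar> powr (q-1))"
  proof -
    have X: "0 < \<bar>x\<bar>" using x by simp
    have l1: "ln ((V * p / \<theta>) powr q * (\<theta>/(p+1))) = q * (ln V + ln p - ln \<theta>) + ln \<theta> - ln (p+1)"
      using V p th by (simp add: ln_mult ln_div ln_powr)
    have lt: "ln \<theta> = ln (p+1) + ln \<bar>x\<bar> - ln (v + p*w)"
      using p X vpw by (simp add: \<theta>_def ln_div ln_mult)
    have l2: "ln ((p/(p+1)) powr q * (V powr q * (v + p*w) powr (q-1) / \<bar>x\<bar> powr (q-1)))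
        = q * (ln p - ln (p+1)) + q * ln V + (q-1) * ln (v + p*w) - (q-1) * ln \<bar>x\<bar>"
      using V p X vpw by (simp add: ln_mult ln_div ln_powr)
    have "ln ((V * p / \<theta>) powr q * (\<theta>/(p+1))) = ln ((p/(p+1)) powr q * (V powr q * (v + p*w) powr (q-1) / \<bar>x\<bar> powr (q-1)))"
      unfolding l1 l2 lt by (simp add: algebra_simps)
    then show ?thesis using V p X vpw th by simp
  qed
  have mem: "(\<eta>, g) \<in> {(\<eta>, g). sobolev_W1q q \<theta> \<eta> g \<and> \<eta> 0 = v \<and> \<eta> \<theta> = w \<and>
                      (\<forall>s\<in>{0..\<theta>}. w \<le> \<eta> s) \<and> x + integral {0..\<theta>} \<eta> \<le> 0}"
    using sob e0 eth ge xc by simp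
  have "I_cost q x v \<theta> w \<le> ereal ((1 / q) * integral {0..\<theta>} (\<lambda>s. \<bar>snd (\<eta>, g) s\<bar> powr q))"
    unfolding I_cost_def by (rule INF_lower[OF mem])
  also have "\<dots> = ereal ((1/q) * (p/(p+1)) powr q * ((v-w) powr q * (v + p*w) powr (q-1) / \<bar>x\<bar> powr (q-1)))"
    unfolding icost val by (simp add: V_def)
  finally show ?thesis .
qed



lemma lowerJ:
  fixes q T v w x :: real
  assumes q: "1 < q" and w0: "0 \<le> w" and wv: "w < v" and x: "x < 0"
  defines "p \<equiv> q/(q-1)"
  shows "ereal ((1/q) * (p/(p+1)) powr q * ((v-w) powr (2*q-1) / \<bar>x\<bar> powr (q-1))) \<le> J_cost q T x v w"
  unfolding J_cost_def I_cost_def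
proof (intro INF_greatest)
  fix \<theta> pr assume th: "\<theta> \<in> {0<..T}" and pr: "pr \<in> {(\<eta>, g). sobolev_W1q q \<theta> \<eta> g \<and> \<eta> 0 = v \<and> \<eta> \<theta> = w \<and>
                      (\<forall>s\<in>{0..\<theta>}. w \<le> \<eta> s) \<and> x + integral {0..\<theta>} \<eta> \<le> 0}"
  obtain \<eta> g where prd: "pr = (\<eta>, g)" by (cases pr)
  have sob: "sobolev_W1q q \<theta> \<eta> g" and e0: "\<eta> 0 = v"
    and eth: "\<eta> \<theta> = w" and ge: "\<forall>s\<in>{0..\<theta>}. w \<le> \<eta> s" and xc: "x + integral {0..\<theta>} \<eta> \<le> 0"
    using pr unfolding prd by auto
  define V where "V = v - w"
  define X where "X = \<bar>x\<bar>"
  have V: "0 < V" using wv by (simp add: V_def)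
  have X: "0 < X" using x by (simp add: X_def)
  have p: "1 < p" using q by (simp add: p_def)
  define a where "a = (p+1)*X/V"
  define \<mu> where "\<mu> = p powr (q-1) / (p+1) powr q * V powr (2*q-1) / X powr q"
  have a: "0 < a" using p X V by (simp add: a_def)
  have mu: "0 \<le> \<mu>" by (simp add: \<mu>_def)
  have lg: "\<mu> * (a * (v - w) + x) - \<mu> powr p * a powr (p + 1) / (p * (p + 1))
           \<le> (1/q) * integral {0..\<theta>} (\<lambda>s. \<bar>g s\<bar> powr q)"
    using lower_gen[OF q _ sob e0 eth ge xc w0 a mu] th unfolding p_def by simp
  have av: "\<mu> * (a * (v - w) + x) - \<mu> powr p * a powr (p + 1) / (p * (p + 1))
     = (1/q) * (p/(p+1)) powr q * (V powr (2*q-1) / X powr (q-1))"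
    using alg_val[OF q V X] x unfolding p_def a_def \<mu>_def X_def V_def by simp
  show "ereal ((1/q) * (p/(p+1)) powr q * ((v-w) powr (2*q-1) / \<bar>x\<bar> powr (q-1)))
        \<le> ereal (1 / q * integral {0..\<theta>} (\<lambda>s. \<bar>snd pr s\<bar> powr q))"
    using lg av unfolding V_def X_def prd by simp
qed

theorem proposition2p5:
  fixes q T c :: real and x v w :: "nat \<Rightarrow> real"
  assumes q: "1 < q" and T: "0 < T" and c: "0 < c"
    and x_neg: "\<And>i. x i < 0" and v_pos: "\<And>i. 0 < v i"
    and xv: "(\<lambda>i. \<bar>x i\<bar> / v i) \<longlonglongrightarrow> 0"
    and lower: "\<And>i. v i powr (2 * q - 1) / \<bar>x i\<bar> powr (q - 1) > c"
    and w_nonneg: "\<And>i. 0 \<le> w i" and w_le: "\<And>i. w i \<le> v i"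
    and wv: "(\<lambda>i. w i / v i) \<longlonglongrightarrow> 0"
  shows "(\<forall>\<^sub>F i in sequentially. J_cost q T (x i) (v i) (w i) < \<infinity>) \<and>
         (\<lambda>i. real_of_ereal (J_cost q T (x i) (v i) (w i)))
            \<sim>[sequentially] (\<lambda>i. q powr (q - 1) / (2 * q - 1) powr q *
                                   (v i powr (2 * q - 1) / \<bar>x i\<bar> powr (q - 1))) \<and>
         (q = 2 \<and> (\<lambda>i. v i ^ 2 * w i / \<bar>x i\<bar>) \<longlonglongrightarrow> 0 \<longrightarrow>
         (\<lambda>i. real_of_ereal (J_cost q T (x i) (v i) (w i)) - 2 / 9 * (v i ^ 3 / \<bar>x i\<bar>))
            \<in> O(\<lambda>i. v i ^ 2 * w i / \<bar>x i\<bar>))"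
proof -
  define p where "p = q/(q-1)"
  define K where "K = (1/q) * (p/(p+1)) powr q"
  have p: "1 < p" using q by (simp add: p_def)
  have K: "0 < K" using p q by (simp add: K_def)
  have Keq: "q powr (q-1)/(2*q-1) powr q = K" using K_eq[OF q] by (simp add: K_def p_def)
  define J where "J i = J_cost q T (x i) (v i) (w i)" for i
  define RJ where "RJ i = real_of_ereal (J i)" for i
  define L where "L i = K * ((v i - w i) powr (2*q-1) / \<bar>x i\<bar> powr (q-1))" for i
  define U where "U i = K * ((v i - w i) powr q * (v i + p * w i) powr (q-1) / \<bar>x i\<bar> powr (q-1))" for i
  define M where "M i = K * (v i powr (2*q-1) / \<bar>x i\<bar> powr (q-1))" for i
  define th where "th i = (p+1) * \<bar>x i\<bar> / (v i + p * w i)" for i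
  have Mpos: "0 < M i" for i
  proof -
    have "0 < v i powr (2*q-1)" "0 < \<bar>x i\<bar> powr (q-1)" using v_pos[of i] x_neg[of i] by auto
    then show ?thesis using K unfolding M_def by (intro mult_pos_pos divide_pos_pos)
  qed
  have ev1: "eventually (\<lambda>i. w i / v i < 1) sequentially"
    using wv by (rule order_tendstoD) simp
  have ev2: "eventually (\<lambda>i. \<bar>x i\<bar> / v i < T/(p+1)) sequentially"
    using xv T p by (intro order_tendstoD) auto
  have good: "eventually (\<lambda>i. w i < v i \<and> th i \<le> T) sequentially"
    using ev1 ev2
  proof eventually_elim
    case (elim i)
    have vi: "0 < v i" by (rule v_pos)
    have wvi: "w i < v i" using elim(1) vi by (simp add: divide_less_eq)
    have pw: "0 \<le> p * w i" using p w_nonneg[of i] by simp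
    have "th i \<le> (p+1) * \<bar>x i\<bar> / v i"
      unfolding th_def using p vi pw
      by (intro divide_left_mono mult_nonneg_nonneg mult_pos_pos) auto
    also have "\<dots> < T" using elim(2) p vi by (simp add: field_simps)
    finally show ?case using wvi by simp
  qed
  have bounds: "eventually (\<lambda>i. ereal (L i) \<le> J i \<and> J i \<le> ereal (U i)) sequentially"
    using good
  proof eventually_elim
    case (elim i)
    have "ereal (L i) \<le> J i"
      using lowerJ[OF q w_nonneg[of i] elim[THEN conjunct1] x_neg[of i], where T=T] unfolding L_def J_def K_def p_def by simp
    moreover have "J i \<le> I_cost q (x i) (v i) (th i) (w i)"
    proof -
      have "0 < th i" unfolding th_def using p x_neg[of i] v_pos[of i] w_nonneg[of i]
        by (intro divide_pos_pos mult_pos_pos add_pos_nonneg mult_nonneg_nonneg) auto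
      then have "th i \<in> {0<..T}" using elim by simp
      then show ?thesis unfolding J_def J_cost_def by (rule INF_lower)
    qed
    moreover have "I_cost q (x i) (v i) (th i) (w i) \<le> ereal (U i)"
      using upper[OF q w_nonneg[of i] elim[THEN conjunct1] x_neg[of i]] unfolding U_def th_def K_def p_def
      by (simp add: mult.assoc)
    ultimately show ?case by simp
  qed
  have fin: "eventually (\<lambda>i. J i < \<infinity>) sequentially"
    using bounds by eventually_elim (auto simp: le_less_trans)
  have rb: "eventually (\<lambda>i. L i \<le> RJ i \<and> RJ i \<le> U i) sequentially"
    using bounds
  proof eventually_elim
    case (elim i)
    then show ?case unfolding RJ_def by (cases "J i") auto
  qed
  have LM: "L i / M i = (1 - w i / v i) powr (2*q-1)" for i
  proof -
    have vi: "0 < v i" by (rule v_pos)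
    have "L i / M i = (v i - w i) powr (2*q-1) / v i powr (2*q-1)"
      using K x_neg[of i] vi by (simp add: L_def M_def)
    also have "\<dots> = ((v i - w i) / v i) powr (2*q-1)"
      using w_le[of i] vi by (simp add: powr_divide)
    also have "(v i - w i) / v i = 1 - w i / v i" using vi by (simp add: field_simps)
    finally show ?thesis .
  qed
  have UM: "U i / M i = (1 - w i / v i) powr q * (1 + p * (w i / v i)) powr (q-1)" for i
  proof -
    have vi: "0 < v i" by (rule v_pos)
    have vp: "v i powr (2*q-1) = v i powr q * v i powr (q-1)"
      by (simp add: powr_add[symmetric])
    have "U i / M i = ((v i - w i) powr q / v i powr q) * ((v i + p * w i) powr (q-1) / v i powr (q-1))"
      using K x_neg[of i] vi by (simp add: U_def M_def vp)
    also have "\<dots> = ((v i - w i) / v i) powr q * ((v i + p * w i) / v i) powr (q-1)"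
      using w_le[of i] vi w_nonneg[of i] p by (simp add: powr_divide)
    also have "(v i - w i) / v i = 1 - w i / v i" using vi by (simp add: field_simps)
    also have "(v i + p * w i) / v i = 1 + p * (w i / v i)" using vi by (simp add: field_simps)
    finally show ?thesis .
  qed
  have limL: "(\<lambda>i. L i / M i) \<longlonglongrightarrow> 1"
  proof -
    have "(\<lambda>i. (1 - w i / v i) powr (2*q-1)) \<longlonglongrightarrow> (1 - 0) powr (2*q-1)"
      by (intro tendsto_powr tendsto_diff tendsto_const wv) auto
    then show ?thesis unfolding LM by simp
  qed
  have limU: "(\<lambda>i. U i / M i) \<longlonglongrightarrow> 1"
  proof -
    have "(\<lambda>i. (1 - w i / v i) powr q * (1 + p * (w i / v i)) powr (q-1)) \<longlonglongrightarrow> (1 - 0) powr q * (1 + p * 0) powr (q-1)"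
      by (intro tendsto_mult tendsto_powr tendsto_diff tendsto_add tendsto_const wv) auto
    then show ?thesis unfolding UM by simp
  qed
  have limJ: "(\<lambda>i. RJ i / M i) \<longlonglongrightarrow> 1"
  proof (rule tendsto_sandwich[OF _ _ limL limU])
    show "\<forall>\<^sub>F n in sequentially. L n / M n \<le> RJ n / M n"
      using rb by eventually_elim (use Mpos in \<open>auto intro: divide_right_mono less_imp_le\<close>)
    show "\<forall>\<^sub>F n in sequentially. RJ n / M n \<le> U n / M n"
      using rb by eventually_elim (use Mpos in \<open>auto intro: divide_right_mono less_imp_le\<close>)
  qed
  have equiv: "RJ \<sim>[sequentially] M"
    by (rule asymp_equivI'[OF limJ])
  have Mform: "M = (\<lambda>i. q powr (q - 1) / (2 * q - 1) powr q * (v i powr (2 * q - 1) / \<bar>x i\<bar> powr (q - 1)))"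
    unfolding M_def Keq by simp
  have partii: "(\<lambda>i. RJ i - 2 / 9 * (v i ^ 3 / \<bar>x i\<bar>)) \<in> O(\<lambda>i. v i ^ 2 * w i / \<bar>x i\<bar>)" if q2: "q = 2"
  proof -
    have p2: "p = 2" using q2 by (simp add: p_def)
    have K2: "K = 2/9" using q2 p2 by (simp add: K_def powr_numeral power2_eq_square)
    have "eventually (\<lambda>i. norm (RJ i - 2 / 9 * (v i ^ 3 / \<bar>x i\<bar>)) \<le> 1 * norm (v i ^ 2 * w i / \<bar>x i\<bar>)) sequentially"
      using rb good
    proof eventually_elim
      case (elim i)
      define X where "X = \<bar>x i\<bar>"
      have X: "0 < X" using x_neg[of i] by (simp add: X_def)
      have vi: "0 < v i" by (rule v_pos)
      have wi: "0 \<le> w i" by (rule w_nonneg)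
      have vw: "0 < v i - w i" using elim by simp
      have L2: "L i = 2/9 * ((v i - w i) ^ 3 / X)"
        using vw X unfolding L_def K2 q2 X_def by (simp add: powr_numeral)
      have U2: "U i = 2/9 * ((v i - w i) ^ 2 * (v i + 2 * w i) / X)"
        using vw X vi wi unfolding U_def K2 q2 p2 X_def by (simp add: powr_numeral)
      have pl: "v i ^ 3 - 3 * v i ^ 2 * w i \<le> (v i - w i) ^ 3"
      proof -
        have "(v i - w i) ^ 3 - (v i ^ 3 - 3 * v i ^ 2 * w i) = w i ^ 2 * (3 * v i - w i)"
          by (simp add: power2_eq_square power3_eq_cube algebra_simps)
        moreover have "0 \<le> w i ^ 2 * (3 * v i - w i)" using w_le[of i] wi by simp
        ultimately show ?thesis by simp
      qed
      have pu: "(v i - w i) ^ 2 * (v i + 2 * w i) \<le> v i ^ 3"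
      proof -
        have "v i ^ 3 - (v i - w i) ^ 2 * (v i + 2 * w i) = w i ^ 2 * (3 * v i - 2 * w i)"
          by (simp add: power2_eq_square power3_eq_cube algebra_simps)
        moreover have "0 \<le> w i ^ 2 * (3 * v i - 2 * w i)" using w_le[of i] wi by simp
        ultimately show ?thesis by simp
      qed
      have lo: "2/9 * (v i ^ 3 / X) - 2/3 * (v i ^ 2 * w i / X) \<le> RJ i"
      proof -
        have "2/9 * (v i ^ 3 / X) - 2/3 * (v i ^ 2 * w i / X) = 2/9 * ((v i ^ 3 - 3 * v i ^ 2 * w i) / X)"
          using X by (simp add: field_simps)
        also have "\<dots> \<le> L i" unfolding L2 using pl X by (simp add: divide_right_mono)
        finally show ?thesis using elim by simp
      qed
      have up: "RJ i \<le> 2/9 * (v i ^ 3 / X)"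
      proof -
        have "U i \<le> 2/9 * (v i ^ 3 / X)" unfolding U2 using pu X by (simp add: divide_right_mono)
        then show ?thesis using elim by simp
      qed
      have nn: "0 \<le> v i ^ 2 * w i / X" using wi X by simp
      have "\<bar>RJ i - 2 / 9 * (v i ^ 3 / X)\<bar> \<le> v i ^ 2 * w i / X"
        using lo up nn by simp
      then show ?case unfolding X_def using wi by simp
    qed
    then show ?thesis by (rule bigoI)
  qed
  show ?thesis
    using fin equiv partii unfolding Mform J_def RJ_def by simp
qed


end
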